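(* Let $(T,[\cdot,\cdot],[\cdot,\cdot,\cdot],\alpha)$ be a Hom-Lie-Yamaguti algebra, $(\rho,D,\theta)$ a representation of $T$ on a Hom-vector space $(\mathfrak{h},\beta)$, and $(\nu,\omega)$, $(\nu',\omega')$ two (2,3)-cocycles of $T$ with coefficients in $\mathfrak{h}$. Let $T\oplus_{(\nu,\omega)}\mathfrak{h}$ denote the Hom-Lie-Yamaguti algebra on $T\oplus\mathfrak{h}$ with structure map $\alpha+\beta$ and brackets $$[x_1+u_1,x_2+u_2]_\nu=[x_1,x_2]+\nu(x_1,x_2)+\rho(x_1)(u_2)-\rho(x_2)(u_1),$$ $$[x_1+u_1,x_2+u_2,x_3+u_3]_\omega=[x_1,x_2,x_3]+\omega(x_1,x_2,x_3)+D(x_1,x_2)(u_3)-\theta(x_1,x_3)(u_2)+\theta(x_2,x_3)(u_1),$$ and similarly for $T\oplus_{(\nu',\omega')}\mathfrak{h}$. Consider the abelian extensions $0\to\mathfrak{h}\to T\oplus_{(\nu,\omega)}\mathfrak{h}\to T\to0$ and $0\to\mathfrak{h}\to T\oplus_{(\nu',\omega')}\mathfrak{h}\to T\to0$, where the maps are the inclusion $u\mapsto u$ and the projection $x+u\mapsto x$. These two extensions are equivalent if and only if $(\nu,\omega)$ and $(\nu',\omega')$ are in the same cohomology class, i.e. $(\nu-\nu',\omega-\omega')\in B^2(T,\mathfrak{h})\times B^3(T,\mathfrak{h})$.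
   Context: Throughout, vector spaces are over an algebraically closed field $\mathbb{K}$ of characteristic different from 2 and 3. A Hom-Lie-Yamaguti algebra (HLYA) is a vector space $T$ with a linear map $\alpha:T\to T$, a bilinear map $[\cdot,\cdot]$ and a trilinear map $[\cdot,\cdot,\cdot]$ on $T$ such that for all $x_i,y_i\in T$: (HLY01) $\alpha([x_1,x_2])=[\alpha(x_1),\alpha(x_2)]$; (HLY02) $\alpha([x_1,x_2,x_3])=[\alpha(x_1),\alpha(x_2),\alpha(x_3)]$; (HLY1) $[x_1,x_2]+[x_2,x_1]=0$; (HLY2) $[x_1,x_2,x_3]+[x_2,x_1,x_3]=0$; (HLY3) $\sum_{\mathrm{cyc}(x_1,x_2,x_3)}([[x_1,x_2],\alpha(x_3)]+[x_1,x_2,x_3])=0$; (HLY4) $[[x_1,x_2],\alpha(x_3),\alpha(y_1)]+[[x_2,x_3],\alpha(x_1),\alpha(y_1)]+[[x_3,x_1],\alpha(x_2),\alpha(y_1)]=0$; (HLY5) $[\alpha(x_1),\alpha(x_2),[y_1,y_2]]=[[x_1,x_2,y_1],\alpha^2(y_2)]+[\alpha^2(y_1),[x_1,x_2,y_2]]$; (HLY6) $[\alpha^2(x_1),\alpha^2(x_2),[y_1,y_2,y_3]]=[[x_1,x_2,y_1],\alpha^2(y_2),\alpha^2(y_3)]+[\alpha^2(y_1),[x_1,x_2,y_2],\alpha^2(y_3)]+[\alpha^2(y_1),\alpha^2(y_2),[x_1,x_2,y_3]]$. A homomorphism of HLYAs is a linear map intertwining the structure maps and preserving both brackets. A representation of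 $(T,\alpha)$ on $(V,\beta)$ is a linear map $\rho:T\to\mathrm{End}(V)$ and bilinear maps $D,\theta:T\times T\to\mathrm{End}(V)$ satisfying, for all $x_i,y_i\in T$: (HR01) $\rho(\alpha(x_1))\circ\beta=\beta\circ\rho(x_1)$; (HR02) $D(\alpha(x_1),\alpha(x_2))\circ\beta=\beta\circ D(x_1,x_2)$; (HR03) $\theta(\alpha(x_1),\alpha(x_2))\circ\beta=\beta\circ\theta(x_1,x_2)$; (HR31) $D(x_1,x_2)-\theta(x_2,x_1)+\theta(x_1,x_2)+\rho([x_1,x_2])\circ\beta-\rho(\alpha(x_1))\rho(x_2)+\rho(\alpha(x_2))\rho(x_1)=0$; (HR41) $D([x_1,x_2],\alpha(x_3))+D([x_2,x_3],\alpha(x_1))+D([x_3,x_1],\alpha(x_2))=0$; (HR42) $\theta([x_1,x_2],\alpha(y_1))\circ\beta=\theta(\alpha(x_1),\alpha(y_1))\rho(x_2)-\theta(\alpha(x_2),\alpha(y_1))\rho(x_1)$; (HR51) $D(\alpha(x_1),\alpha(x_2))\rho(y_2)=\rho(\alpha^2(y_2))D(x_1,x_2)+\rho([x_1,x_2,y_2])\circ\beta^2$; (HR52) $\theta(\alpha(x_1),[y_1,y_2])\circ\beta=\rho(\alpha^2(y_1))\theta(x_1,y_2)-\rho(\alpha^2(y_2))\theta(x_1,y_1)$; (HR61) $D(\alpha^2(x_1),\alpha^2(x_2))\theta(y_1,y_2)=\theta(\alpha^2(y_1),\alpha^2(y_2))D(x_1,x_2)+\theta([x_1,x_2,y_1],\alpha^2(y_2))\circ\beta^2+\theta(\alpha^2(y_1),[x_1,x_2,y_2])\circ\beta^2$;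 (HR62) $\theta(\alpha^2(x_1),[y_1,y_2,y_3])\circ\beta^2=\theta(\alpha^2(y_2),\alpha^2(y_3))\theta(x_1,y_1)-\theta(\alpha^2(y_1),\alpha^2(y_3))\theta(x_1,y_2)+D(\alpha^2(y_1),\alpha^2(y_2))\theta(x_1,y_3)$. $C^2(T,V)$: bilinear $\nu:T\times T\to V$, antisymmetric, with $\nu(\alpha(x_1),\alpha(x_2))=\beta(\nu(x_1,x_2))$ (CC01). $C^3(T,V)$: trilinear $\omega:T^3\to V$ with $\omega(x_1,x_2,x_3)=-\omega(x_2,x_1,x_3)$ and $\omega(\alpha(x_1),\alpha(x_2),\alpha(x_3))=\beta(\omega(x_1,x_2,x_3))$ (CC02). A (2,3)-cocycle is $(\nu,\omega)\in C^2\times C^3$ satisfying for all $x_i,y_i$: (CC1) $\sum_{\mathrm{cyc}(x_1,x_2,x_3)}\big(\omega(x_1,x_2,x_3)-\rho(\alpha(x_1))\nu(x_2,x_3)+\nu([x_1,x_2],\alpha(x_3))\big)=0$; (CC2) $\sum_{\mathrm{cyc}(x_1,x_2,x_3)}\big(\theta(\alpha(x_1),\alpha(y_1))\nu(x_2,x_3)+\omega([x_1,x_2],\alpha(x_3),\alpha(y_1))\big)=0$; (CC3) $\omega(\alpha(x_1),\alpha(x_2),[y_1,y_2])+D(\alpha(x_1),\alpha(x_2))\nu(y_1,y_2)=\nu([x_1,x_2,y_1],\alpha^2(y_2))+\nu(\alpha^2(y_1),[x_1,x_2,y_2])+\rho(\alpha^2(y_1))\omega(x_1,x_2,y_2)-\rho(\alpha^2(y_2))\omega(x_1,x_2,y_1)$;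 (CC4) $\omega(\alpha^2(x_1),\alpha^2(x_2),[y_1,y_2,y_3])+D(\alpha^2(x_1),\alpha^2(x_2))\omega(y_1,y_2,y_3)=\omega([x_1,x_2,y_1],\alpha^2(y_2),\alpha^2(y_3))+\omega(\alpha^2(y_1),[x_1,x_2,y_2],\alpha^2(y_3))+\omega(\alpha^2(y_1),\alpha^2(y_2),[x_1,x_2,y_3])+\theta(\alpha^2(y_2),\alpha^2(y_3))\omega(x_1,x_2,y_1)-\theta(\alpha^2(y_1),\alpha^2(y_3))\omega(x_1,x_2,y_2)+D(\alpha^2(y_1),\alpha^2(y_2))\omega(x_1,x_2,y_3)$. $B^2(T,V)\times B^3(T,V)$ is the set of pairs $(\nu,\omega)\in C^2\times C^3$ for which there is a linear $f:T\to V$ with $f\circ\alpha=\beta\circ f$, $\nu(x_1,x_2)=\rho(x_1)f(x_2)-\rho(x_2)f(x_1)-f([x_1,x_2])$ and $\omega(x_1,x_2,x_3)=\theta(x_2,x_3)f(x_1)-\theta(x_1,x_3)f(x_2)+D(x_1,x_2)f(x_3)-f([x_1,x_2,x_3])$. Two extensions $0\to\mathfrak{h}\xrightarrow{i}\hat T\xrightarrow{p}T\to0$ and $0\to\mathfrak{h}\xrightarrow{j}\tilde T\xrightarrow{q}T\to0$ of HLYAs are equivalent if there is a HLYA homomorphism $F:\hat T\to\tilde T$ with $F\circ i=j$ and $q\circ F=p$. *)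

theory Defs
  imports Main "HOL-Library.Product_Plus" "HOL-Computational_Algebra.Polynomial"
begin

definition alg_closed_field :: "'k::field itself \<Rightarrow> bool" where
  "alg_closed_field _ \<longleftrightarrow> (\<forall>p::'k poly. degree p \<ge> 1 \<longrightarrow> (\<exists>x. poly p x = 0))"

definition char_not_2_3 :: "'k::field itself \<Rightarrow> bool" where
  "char_not_2_3 _ \<longleftrightarrow> (2::'k) \<noteq> 0 \<and> (3::'k) \<noteq> 0"

definition bilinear_map ::
  "('k::field \<Rightarrow> 'a::ab_group_add \<Rightarrow> 'a) \<Rightarrow> ('k \<Rightarrow> 'b::ab_group_add \<Rightarrow> 'b) \<Rightarrow>
   ('k \<Rightarrow> 'c::ab_group_add \<Rightarrow> 'c) \<Rightarrow> ('a \<Rightarrow> 'b \<Rightarrow> 'c) \<Rightarrow> bool" where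
  "bilinear_map s1 s2 s3 f \<longleftrightarrow>
     (\<forall>x. Vector_Spaces.linear s2 s3 (f x)) \<and> (\<forall>y. Vector_Spaces.linear s1 s3 (\<lambda>x. f x y))"

definition trilinear_map ::
  "('k::field \<Rightarrow> 'a::ab_group_add \<Rightarrow> 'a) \<Rightarrow> ('k \<Rightarrow> 'c::ab_group_add \<Rightarrow> 'c) \<Rightarrow>
   ('a \<Rightarrow> 'a \<Rightarrow> 'a \<Rightarrow> 'c) \<Rightarrow> bool" where
  "trilinear_map s1 s2 f \<longleftrightarrow>
     (\<forall>x y. Vector_Spaces.linear s1 s2 (f x y)) \<and>
     (\<forall>x z. Vector_Spaces.linear s1 s2 (\<lambda>y. f x y z)) \<and>
     (\<forall>y z. Vector_Spaces.linear s1 s2 (\<lambda>x. f x y z))"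

definition HLYA ::
  "('k::field \<Rightarrow> 't::ab_group_add \<Rightarrow> 't) \<Rightarrow> ('t \<Rightarrow> 't) \<Rightarrow> ('t \<Rightarrow> 't \<Rightarrow> 't) \<Rightarrow>
   ('t \<Rightarrow> 't \<Rightarrow> 't \<Rightarrow> 't) \<Rightarrow> bool" where
  "HLYA s al br tr \<longleftrightarrow>
     Vector_Spaces.linear s s al \<and> bilinear_map s s s br \<and> trilinear_map s s tr \<and>
     (\<forall>x1 x2 x3 y1 y2 y3.
        al (br x1 x2) = br (al x1) (al x2) \<and>
        al (tr x1 x2 x3) = tr (al x1) (al x2) (al x3) \<and>
        br x1 x2 + br x2 x1 = 0 \<and>
        tr x1 x2 x3 + tr x2 x1 x3 = 0 \<and>
        (br (br x1 x2) (al x3) + tr x1 x2 x3) + (br (br x2 x3) (al x1) + tr x2 x3 x1)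
          + (br (br x3 x1) (al x2) + tr x3 x1 x2) = 0 \<and>
        tr (br x1 x2) (al x3) (al y1) + tr (br x2 x3) (al x1) (al y1)
          + tr (br x3 x1) (al x2) (al y1) = 0 \<and>
        tr (al x1) (al x2) (br y1 y2) =
          br (tr x1 x2 y1) (al (al y2)) + br (al (al y1)) (tr x1 x2 y2) \<and>
        tr (al (al x1)) (al (al x2)) (tr y1 y2 y3) =
          tr (tr x1 x2 y1) (al (al y2)) (al (al y3))
          + tr (al (al y1)) (tr x1 x2 y2) (al (al y3))
          + tr (al (al y1)) (al (al y2)) (tr x1 x2 y3))"

definition HLYA_hom ::
  "('k::field \<Rightarrow> 'a::ab_group_add \<Rightarrow> 'a) \<Rightarrow> ('a \<Rightarrow> 'a) \<Rightarrow> ('a \<Rightarrow> 'a \<Rightarrow> 'a) \<Rightarrow>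
   ('a \<Rightarrow> 'a \<Rightarrow> 'a \<Rightarrow> 'a) \<Rightarrow>
   ('k \<Rightarrow> 'b::ab_group_add \<Rightarrow> 'b) \<Rightarrow> ('b \<Rightarrow> 'b) \<Rightarrow> ('b \<Rightarrow> 'b \<Rightarrow> 'b) \<Rightarrow>
   ('b \<Rightarrow> 'b \<Rightarrow> 'b \<Rightarrow> 'b) \<Rightarrow> ('a \<Rightarrow> 'b) \<Rightarrow> bool" where
  "HLYA_hom sA alA brA trA sB alB brB trB F \<longleftrightarrow>
     Vector_Spaces.linear sA sB F \<and>
     (\<forall>x. F (alA x) = alB (F x)) \<and>
     (\<forall>x y. F (brA x y) = brB (F x) (F y)) \<and>
     (\<forall>x y z. F (trA x y z) = trB (F x) (F y) (F z))"

definition HLYA_rep ::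
  "('k::field \<Rightarrow> 't::ab_group_add \<Rightarrow> 't) \<Rightarrow> ('t \<Rightarrow> 't) \<Rightarrow> ('t \<Rightarrow> 't \<Rightarrow> 't) \<Rightarrow>
   ('t \<Rightarrow> 't \<Rightarrow> 't \<Rightarrow> 't) \<Rightarrow> ('k \<Rightarrow> 'v::ab_group_add \<Rightarrow> 'v) \<Rightarrow> ('v \<Rightarrow> 'v) \<Rightarrow>
   ('t \<Rightarrow> 'v \<Rightarrow> 'v) \<Rightarrow> ('t \<Rightarrow> 't \<Rightarrow> 'v \<Rightarrow> 'v) \<Rightarrow> ('t \<Rightarrow> 't \<Rightarrow> 'v \<Rightarrow> 'v) \<Rightarrow> bool" where
  "HLYA_rep sT al br tr sV be rho D th \<longleftrightarrow>
     Vector_Spaces.linear sV sV be \<and>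
     (\<forall>x. Vector_Spaces.linear sV sV (rho x)) \<and>
     (\<forall>u. Vector_Spaces.linear sT sV (\<lambda>x. rho x u)) \<and>
     (\<forall>x y. Vector_Spaces.linear sV sV (D x y)) \<and>
     (\<forall>u. bilinear_map sT sT sV (\<lambda>x y. D x y u)) \<and>
     (\<forall>x y. Vector_Spaces.linear sV sV (th x y)) \<and>
     (\<forall>u. bilinear_map sT sT sV (\<lambda>x y. th x y u)) \<and>
     (\<forall>x1 x2 x3 y1 y2 y3 u.
        rho (al x1) (be u) = be (rho x1 u) \<and>
        D (al x1) (al x2) (be u) = be (D x1 x2 u) \<and>
        th (al x1) (al x2) (be u) = be (th x1 x2 u) \<and>
        D x1 x2 u - th x2 x1 u + th x1 x2 u + rho (br x1 x2) (be u)
          - rho (al x1) (rho x2 u) + rho (al x2) (rho x1 u) = 0 \<and>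
        D (br x1 x2) (al x3) u + D (br x2 x3) (al x1) u + D (br x3 x1) (al x2) u = 0 \<and>
        th (br x1 x2) (al y1) (be u) =
          th (al x1) (al y1) (rho x2 u) - th (al x2) (al y1) (rho x1 u) \<and>
        D (al x1) (al x2) (rho y2 u) =
          rho (al (al y2)) (D x1 x2 u) + rho (tr x1 x2 y2) (be (be u)) \<and>
        th (al x1) (br y1 y2) (be u) =
          rho (al (al y1)) (th x1 y2 u) - rho (al (al y2)) (th x1 y1 u) \<and>
        D (al (al x1)) (al (al x2)) (th y1 y2 u) =
          th (al (al y1)) (al (al y2)) (D x1 x2 u)
          + th (tr x1 x2 y1) (al (al y2)) (be (be u))
          + th (al (al y1)) (tr x1 x2 y2) (be (be u)) \<and>
        th (al (al x1)) (tr y1 y2 y3) (be (be u)) =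
          th (al (al y2)) (al (al y3)) (th x1 y1 u)
          - th (al (al y1)) (al (al y3)) (th x1 y2 u)
          + D (al (al y1)) (al (al y2)) (th x1 y3 u))"

definition C2 ::
  "('k::field \<Rightarrow> 't::ab_group_add \<Rightarrow> 't) \<Rightarrow> ('t \<Rightarrow> 't) \<Rightarrow> ('k \<Rightarrow> 'v::ab_group_add \<Rightarrow> 'v) \<Rightarrow>
   ('v \<Rightarrow> 'v) \<Rightarrow> ('t \<Rightarrow> 't \<Rightarrow> 'v) \<Rightarrow> bool" where
  "C2 sT al sV be nu \<longleftrightarrow> bilinear_map sT sT sV nu \<and>
     (\<forall>x1 x2. nu x1 x2 = - nu x2 x1) \<and>
     (\<forall>x1 x2. nu (al x1) (al x2) = be (nu x1 x2))"

definition C3 ::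
  "('k::field \<Rightarrow> 't::ab_group_add \<Rightarrow> 't) \<Rightarrow> ('t \<Rightarrow> 't) \<Rightarrow> ('k \<Rightarrow> 'v::ab_group_add \<Rightarrow> 'v) \<Rightarrow>
   ('v \<Rightarrow> 'v) \<Rightarrow> ('t \<Rightarrow> 't \<Rightarrow> 't \<Rightarrow> 'v) \<Rightarrow> bool" where
  "C3 sT al sV be om \<longleftrightarrow> trilinear_map sT sV om \<and>
     (\<forall>x1 x2 x3. om x1 x2 x3 = - om x2 x1 x3) \<and>
     (\<forall>x1 x2 x3. om (al x1) (al x2) (al x3) = be (om x1 x2 x3))"

definition cocycle23 ::
  "('k::field \<Rightarrow> 't::ab_group_add \<Rightarrow> 't) \<Rightarrow> ('t \<Rightarrow> 't) \<Rightarrow> ('t \<Rightarrow> 't \<Rightarrow> 't) \<Rightarrow>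
   ('t \<Rightarrow> 't \<Rightarrow> 't \<Rightarrow> 't) \<Rightarrow> ('k \<Rightarrow> 'v::ab_group_add \<Rightarrow> 'v) \<Rightarrow> ('v \<Rightarrow> 'v) \<Rightarrow>
   ('t \<Rightarrow> 'v \<Rightarrow> 'v) \<Rightarrow> ('t \<Rightarrow> 't \<Rightarrow> 'v \<Rightarrow> 'v) \<Rightarrow> ('t \<Rightarrow> 't \<Rightarrow> 'v \<Rightarrow> 'v) \<Rightarrow>
   ('t \<Rightarrow> 't \<Rightarrow> 'v) \<Rightarrow> ('t \<Rightarrow> 't \<Rightarrow> 't \<Rightarrow> 'v) \<Rightarrow> bool" where
  "cocycle23 sT al br tr sV be rho D th nu om \<longleftrightarrow>
     C2 sT al sV be nu \<and> C3 sT al sV be om \<and>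
     (\<forall>x1 x2 x3 y1 y2 y3.
        (om x1 x2 x3 - rho (al x1) (nu x2 x3) + nu (br x1 x2) (al x3))
        + (om x2 x3 x1 - rho (al x2) (nu x3 x1) + nu (br x2 x3) (al x1))
        + (om x3 x1 x2 - rho (al x3) (nu x1 x2) + nu (br x3 x1) (al x2)) = 0 \<and>
        (th (al x1) (al y1) (nu x2 x3) + om (br x1 x2) (al x3) (al y1))
        + (th (al x2) (al y1) (nu x3 x1) + om (br x2 x3) (al x1) (al y1))
        + (th (al x3) (al y1) (nu x1 x2) + om (br x3 x1) (al x2) (al y1)) = 0 \<and>
        om (al x1) (al x2) (br y1 y2) + D (al x1) (al x2) (nu y1 y2) =
          nu (tr x1 x2 y1) (al (al y2)) + nu (al (al y1)) (tr x1 x2 y2)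
          + rho (al (al y1)) (om x1 x2 y2) - rho (al (al y2)) (om x1 x2 y1) \<and>
        om (al (al x1)) (al (al x2)) (tr y1 y2 y3) + D (al (al x1)) (al (al x2)) (om y1 y2 y3) =
          om (tr x1 x2 y1) (al (al y2)) (al (al y3))
          + om (al (al y1)) (tr x1 x2 y2) (al (al y3))
          + om (al (al y1)) (al (al y2)) (tr x1 x2 y3)
          + th (al (al y2)) (al (al y3)) (om x1 x2 y1)
          - th (al (al y1)) (al (al y3)) (om x1 x2 y2)
          + D (al (al y1)) (al (al y2)) (om x1 x2 y3))"

definition coboundary23 ::
  "('k::field \<Rightarrow> 't::ab_group_add \<Rightarrow> 't) \<Rightarrow> ('t \<Rightarrow> 't) \<Rightarrow> ('t \<Rightarrow> 't \<Rightarrow> 't) \<Rightarrow>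
   ('t \<Rightarrow> 't \<Rightarrow> 't \<Rightarrow> 't) \<Rightarrow> ('k \<Rightarrow> 'v::ab_group_add \<Rightarrow> 'v) \<Rightarrow> ('v \<Rightarrow> 'v) \<Rightarrow>
   ('t \<Rightarrow> 'v \<Rightarrow> 'v) \<Rightarrow> ('t \<Rightarrow> 't \<Rightarrow> 'v \<Rightarrow> 'v) \<Rightarrow> ('t \<Rightarrow> 't \<Rightarrow> 'v \<Rightarrow> 'v) \<Rightarrow>
   ('t \<Rightarrow> 't \<Rightarrow> 'v) \<Rightarrow> ('t \<Rightarrow> 't \<Rightarrow> 't \<Rightarrow> 'v) \<Rightarrow> bool" where
  "coboundary23 sT al br tr sV be rho D th nu om \<longleftrightarrow>
     C2 sT al sV be nu \<and> C3 sT al sV be om \<and>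
     (\<exists>f. Vector_Spaces.linear sT sV f \<and> (\<forall>x. f (al x) = be (f x)) \<and>
        (\<forall>x1 x2. nu x1 x2 = rho x1 (f x2) - rho x2 (f x1) - f (br x1 x2)) \<and>
        (\<forall>x1 x2 x3. om x1 x2 x3 =
           th x2 x3 (f x1) - th x1 x3 (f x2) + D x1 x2 (f x3) - f (tr x1 x2 x3)))"

definition prod_scale ::
  "('k \<Rightarrow> 't \<Rightarrow> 't) \<Rightarrow> ('k \<Rightarrow> 'v \<Rightarrow> 'v) \<Rightarrow> 'k \<Rightarrow> 't \<times> 'v \<Rightarrow> 't \<times> 'v" where
  "prod_scale sT sV c p = (sT c (fst p), sV c (snd p))"

definition sd_alpha :: "('t \<Rightarrow> 't) \<Rightarrow> ('v \<Rightarrow> 'v) \<Rightarrow> 't \<times> 'v \<Rightarrow> 't \<times> 'v" where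
  "sd_alpha al be p = (al (fst p), be (snd p))"

definition sd_br ::
  "('t \<Rightarrow> 't \<Rightarrow> 't) \<Rightarrow> ('t \<Rightarrow> 'v \<Rightarrow> 'v) \<Rightarrow> ('t \<Rightarrow> 't \<Rightarrow> 'v::ab_group_add) \<Rightarrow>
   't \<times> 'v \<Rightarrow> 't \<times> 'v \<Rightarrow> 't \<times> 'v" where
  "sd_br br rho nu p q =
     (br (fst p) (fst q), nu (fst p) (fst q) + rho (fst p) (snd q) - rho (fst q) (snd p))"

definition sd_tr ::
  "('t \<Rightarrow> 't \<Rightarrow> 't \<Rightarrow> 't) \<Rightarrow> ('t \<Rightarrow> 't \<Rightarrow> 'v \<Rightarrow> 'v) \<Rightarrow> ('t \<Rightarrow> 't \<Rightarrow> 'v \<Rightarrow> 'v) \<Rightarrow>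
   ('t \<Rightarrow> 't \<Rightarrow> 't \<Rightarrow> 'v::ab_group_add) \<Rightarrow> 't \<times> 'v \<Rightarrow> 't \<times> 'v \<Rightarrow> 't \<times> 'v \<Rightarrow> 't \<times> 'v" where
  "sd_tr tr D th om p q r =
     (tr (fst p) (fst q) (fst r),
      om (fst p) (fst q) (fst r) + D (fst p) (fst q) (snd r)
        - th (fst p) (fst r) (snd q) + th (fst q) (fst r) (snd p))"

definition ext_equiv ::
  "('k::field \<Rightarrow> 'a::ab_group_add \<Rightarrow> 'a) \<Rightarrow> ('a \<Rightarrow> 'a) \<Rightarrow> ('a \<Rightarrow> 'a \<Rightarrow> 'a) \<Rightarrow>
   ('a \<Rightarrow> 'a \<Rightarrow> 'a \<Rightarrow> 'a) \<Rightarrow> ('h \<Rightarrow> 'a) \<Rightarrow> ('a \<Rightarrow> 't) \<Rightarrow>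
   ('k \<Rightarrow> 'b::ab_group_add \<Rightarrow> 'b) \<Rightarrow> ('b \<Rightarrow> 'b) \<Rightarrow> ('b \<Rightarrow> 'b \<Rightarrow> 'b) \<Rightarrow>
   ('b \<Rightarrow> 'b \<Rightarrow> 'b \<Rightarrow> 'b) \<Rightarrow> ('h \<Rightarrow> 'b) \<Rightarrow> ('b \<Rightarrow> 't) \<Rightarrow> bool" where
  "ext_equiv sA alA brA trA i p sB alB brB trB j q \<longleftrightarrow>
     (\<exists>F. HLYA_hom sA alA brA trA sB alB brB trB F \<and> F \<circ> i = j \<and> q \<circ> F = p)"

end

theory Submission
  imports Defs
begin


lemma lin_add: "Vector_Spaces.linear s1 s2 f \<Longrightarrow> f (x + y) = f x + f y"
  by (simp add: Vector_Spaces.linear_iff)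
lemma lin_scale: "Vector_Spaces.linear s1 s2 f \<Longrightarrow> f (s1 c x) = s2 c (f x)"
  by (simp add: Vector_Spaces.linear_iff)
lemma lin_zero: "Vector_Spaces.linear s1 s2 f \<Longrightarrow> f 0 = 0"
  using lin_add[of s1 s2 f 0 0] by simp
lemma lin_neg: "Vector_Spaces.linear s1 s2 f \<Longrightarrow> f (- x) = - f x"
  using lin_add[of s1 s2 f x "-x"] lin_zero[of s1 s2 f] by (metis add.commute add.right_neutral eq_neg_iff_add_eq_0)
lemma lin_diff: "Vector_Spaces.linear s1 s2 f \<Longrightarrow> f (x - y) = f x - f y"
  using lin_add[of s1 s2 f x "-y"] lin_neg[of s1 s2 f y] by simp

lemma vs_mod: "vector_space s \<Longrightarrow> module s" by (simp add: module_iff_vector_space)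

lemma lin_vs2: "Vector_Spaces.linear s1 s2 f \<Longrightarrow> vector_space s2"
  by (simp add: Vector_Spaces.linear_iff)
lemma lin_vs1: "Vector_Spaces.linear s1 s2 f \<Longrightarrow> vector_space s1"
  by (simp add: Vector_Spaces.linear_iff)

lemma linear_diff_fun:
  assumes "Vector_Spaces.linear s1 s2 f" "Vector_Spaces.linear s1 s2 g"
  shows "Vector_Spaces.linear s1 s2 (\<lambda>x. f x - g x)"
proof -
  have vs: "vector_space s2" using assms lin_vs2 by blast
  show ?thesis using assms
    unfolding Vector_Spaces.linear_iff
    by (auto simp: module.scale_right_diff_distrib[OF vs_mod[OF vs]] algebra_simps)
qed

lemma bilinear_diff:
  "bilinear_map s1 s2 s3 f \<Longrightarrow> bilinear_map s1 s2 s3 g \<Longrightarrow> bilinear_map s1 s2 s3 (\<lambda>x y. f x y - g x y)"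
  unfolding bilinear_map_def by (auto intro: linear_diff_fun)

lemma trilinear_diff:
  "trilinear_map s1 s2 f \<Longrightarrow> trilinear_map s1 s2 g \<Longrightarrow> trilinear_map s1 s2 (\<lambda>x y z. f x y z - g x y z)"
  unfolding trilinear_map_def by (auto intro: linear_diff_fun)

lemma C_diff:
  assumes "C2 sT al sV be nu" "C2 sT al sV be nu'" "C3 sT al sV be om" "C3 sT al sV be om'"
    and "Vector_Spaces.linear sV sV be"
  shows "C2 sT al sV be (\<lambda>x y. nu x y - nu' x y) \<and> C3 sT al sV be (\<lambda>x y z. om x y z - om' x y z)"
proof -
  have a: "bilinear_map sT sT sV nu" "\<And>x y. nu x y = - nu y x" "\<And>x y. nu (al x) (al y) = be (nu x y)"
    using assms(1) unfolding C2_def by blast+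
  have b: "bilinear_map sT sT sV nu'" "\<And>x y. nu' x y = - nu' y x" "\<And>x y. nu' (al x) (al y) = be (nu' x y)"
    using assms(2) unfolding C2_def by blast+
  have c: "trilinear_map sT sV om" "\<And>x y z. om x y z = - om y x z" "\<And>x y z. om (al x) (al y) (al z) = be (om x y z)"
    using assms(3) unfolding C3_def by blast+
  have d: "trilinear_map sT sV om'" "\<And>x y z. om' x y z = - om' y x z" "\<And>x y z. om' (al x) (al y) (al z) = be (om' x y z)"
    using assms(4) unfolding C3_def by blast+
  show ?thesis unfolding C2_def C3_def
  proof (intro conjI allI)
    show "bilinear_map sT sT sV (\<lambda>x y. nu x y - nu' x y)" by (rule bilinear_diff[OF a(1) b(1)])
    show "trilinear_map sT sV (\<lambda>x y z. om x y z - om' x y z)" by (rule trilinear_diff[OF c(1) d(1)])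
  next
    fix x y show "nu x y - nu' x y = - (nu y x - nu' y x)"
      using a(2)[of x y] b(2)[of x y] by simp
  next
    fix x y show "nu (al x) (al y) - nu' (al x) (al y) = be (nu x y - nu' x y)"
      by (simp only: a(3) b(3) lin_diff[OF assms(5)])
  next
    fix x y z show "om x y z - om' x y z = - (om y x z - om' y x z)"
      using c(2)[of x y z] d(2)[of x y z] by simp
  next
    fix x y z show "om (al x) (al y) (al z) - om' (al x) (al y) (al z) = be (om x y z - om' x y z)"
      by (simp only: c(3) d(3) lin_diff[OF assms(5)])
  qed
qed

lemma vs_prod:
  assumes "vector_space sT" "vector_space sV"
  shows "vector_space (prod_scale sT sV)"
  using assms unfolding vector_space_def prod_scale_def by auto

theorem lemma4p6:
  fixes sT :: "'k::field \<Rightarrow> 't::ab_group_add \<Rightarrow> 't"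
    and sV :: "'k \<Rightarrow> 'v::ab_group_add \<Rightarrow> 'v"
    and al :: "'t \<Rightarrow> 't" and br :: "'t \<Rightarrow> 't \<Rightarrow> 't" and tr :: "'t \<Rightarrow> 't \<Rightarrow> 't \<Rightarrow> 't"
    and be :: "'v \<Rightarrow> 'v"
    and rho :: "'t \<Rightarrow> 'v \<Rightarrow> 'v" and D th :: "'t \<Rightarrow> 't \<Rightarrow> 'v \<Rightarrow> 'v"
    and nu nu' :: "'t \<Rightarrow> 't \<Rightarrow> 'v" and om om' :: "'t \<Rightarrow> 't \<Rightarrow> 't \<Rightarrow> 'v"
  assumes "alg_closed_field TYPE('k)" and "char_not_2_3 TYPE('k)"
    and "vector_space sT" and "vector_space sV"
    and "HLYA sT al br tr"
    and "HLYA_rep sT al br tr sV be rho D th"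
    and "cocycle23 sT al br tr sV be rho D th nu om"
    and "cocycle23 sT al br tr sV be rho D th nu' om'"
  shows "ext_equiv (prod_scale sT sV) (sd_alpha al be) (sd_br br rho nu) (sd_tr tr D th om)
            (\<lambda>u. (0, u)) fst
          (prod_scale sT sV) (sd_alpha al be) (sd_br br rho nu') (sd_tr tr D th om')
            (\<lambda>u. (0, u)) fst
     \<longleftrightarrow> coboundary23 sT al br tr sV be rho D th
            (\<lambda>x y. nu x y - nu' x y) (\<lambda>x y z. om x y z - om' x y z)"
proof -
  have vT: "vector_space sT" and vV: "vector_space sV" using assms(3,4) .
  have vP: "vector_space (prod_scale sT sV)" using vs_prod[OF vT vV] .
  have sV0: "\<And>c. sV c 0 = 0" using module.scale_zero_right[OF vs_mod[OF vV]] .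
  have sT0: "\<And>c. sT c 0 = 0" using module.scale_zero_right[OF vs_mod[OF vT]] .
  have rep: "HLYA_rep sT al br tr sV be rho D th" by fact
  have lbe: "Vector_Spaces.linear sV sV be" and lrho: "\<And>x. Vector_Spaces.linear sV sV (rho x)"
    and lD: "\<And>x y. Vector_Spaces.linear sV sV (D x y)"
    and lth: "\<And>x y. Vector_Spaces.linear sV sV (th x y)"
    using rep unfolding HLYA_rep_def by auto
  have lal: "Vector_Spaces.linear sT sT al" using assms(5) unfolding HLYA_def by auto
  have Cs: "C2 sT al sV be nu" "C2 sT al sV be nu'" "C3 sT al sV be om" "C3 sT al sV be om'"
    using assms(7,8) unfolding cocycle23_def by auto
  have Cd: "C2 sT al sV be (\<lambda>x y. nu x y - nu' x y) \<and> C3 sT al sV be (\<lambda>x y z. om x y z - om' x y z)"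
    using C_diff[OF Cs lbe] .
  note z = lin_zero[OF lbe] lin_zero[OF lrho] lin_zero[OF lD] lin_zero[OF lth]
  note ad = lin_add[OF lbe] lin_add[OF lrho] lin_add[OF lD] lin_add[OF lth]
  show ?thesis
  proof
    assume "ext_equiv (prod_scale sT sV) (sd_alpha al be) (sd_br br rho nu) (sd_tr tr D th om)
            (\<lambda>u. (0, u)) fst
          (prod_scale sT sV) (sd_alpha al be) (sd_br br rho nu') (sd_tr tr D th om')
            (\<lambda>u. (0, u)) fst"
    then obtain F where hom: "HLYA_hom (prod_scale sT sV) (sd_alpha al be) (sd_br br rho nu) (sd_tr tr D th om)
          (prod_scale sT sV) (sd_alpha al be) (sd_br br rho nu') (sd_tr tr D th om') F"
      and Fi: "F \<circ> (\<lambda>u. (0, u)) = (\<lambda>u. (0, u))" and Fp: "fst \<circ> F = fst"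
      unfolding ext_equiv_def by blast
    have lF: "Vector_Spaces.linear (prod_scale sT sV) (prod_scale sT sV) F"
      and Fal: "\<And>x. F (sd_alpha al be x) = sd_alpha al be (F x)"
      and Fbr: "\<And>x y. F (sd_br br rho nu x y) = sd_br br rho nu' (F x) (F y)"
      and Ftr: "\<And>x y z. F (sd_tr tr D th om x y z) = sd_tr tr D th om' (F x) (F y) (F z)"
      using hom unfolding HLYA_hom_def by auto
    define g where "g x = snd (F (x, 0))" for x
    have F0: "F (0, u) = (0, u)" for u using Fi by (simp add: fun_eq_iff)
    have Fx0: "F (x, 0) = (x, g x)" for x
      using Fp unfolding g_def by (metis comp_apply fst_conv prod.collapse)
    have Fxu: "F (x, u) = (x, g x + u)" for x u
    proof -
      have "F (x, u) = F ((x, 0) + (0, u))" by simp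
      also have "\<dots> = F (x,0) + F (0,u)" by (rule lin_add[OF lF])
      finally show ?thesis by (simp add: Fx0 F0)
    qed
    have lg: "Vector_Spaces.linear sT sV g"
      unfolding Vector_Spaces.linear_iff
    proof (intro conjI allI vT vV)
      fix x y show "g (x + y) = g x + g y"
        using Fxu[of "x+y" 0] lin_add[OF lF, of "(x,0)" "(y,0)"] by (simp add: Fxu)
    next
      fix c x show "g (sT c x) = sV c (g x)"
        using lin_scale[OF lF, of c "(x,0)"] by (simp add: Fxu prod_scale_def sV0)
    qed
    have gal: "g (al x) = be (g x)" for x
      using Fal[of "(x,0)"] by (simp add: Fxu sd_alpha_def z)
    have nud: "nu x1 x2 - nu' x1 x2 = rho x1 (g x2) - rho x2 (g x1) - g (br x1 x2)" for x1 x2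
    proof -
      have "g (br x1 x2) + nu x1 x2 = nu' x1 x2 + rho x1 (g x2) - rho x2 (g x1)"
        using Fbr[of "(x1,0)" "(x2,0)"] by (simp add: Fxu sd_br_def z)
      then show ?thesis by (simp add: algebra_simps)
    qed
    have omd: "om x1 x2 x3 - om' x1 x2 x3 =
           th x2 x3 (g x1) - th x1 x3 (g x2) + D x1 x2 (g x3) - g (tr x1 x2 x3)" for x1 x2 x3
    proof -
      have "g (tr x1 x2 x3) + om x1 x2 x3 = om' x1 x2 x3 + D x1 x2 (g x3) - th x1 x3 (g x2) + th x2 x3 (g x1)"
        using Ftr[of "(x1,0)" "(x2,0)" "(x3,0)"] by (simp add: Fxu sd_tr_def z)
      then show ?thesis by (simp add: algebra_simps)
    qed
    show "coboundary23 sT al br tr sV be rho D th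
            (\<lambda>x y. nu x y - nu' x y) (\<lambda>x y z. om x y z - om' x y z)"
      unfolding coboundary23_def using Cd lg gal nud omd by blast
  next
    assume "coboundary23 sT al br tr sV be rho D th
            (\<lambda>x y. nu x y - nu' x y) (\<lambda>x y z. om x y z - om' x y z)"
    then obtain f where lf: "Vector_Spaces.linear sT sV f" and fal: "\<And>x. f (al x) = be (f x)"
      and nud: "\<And>x1 x2. nu x1 x2 - nu' x1 x2 = rho x1 (f x2) - rho x2 (f x1) - f (br x1 x2)"
      and omd: "\<And>x1 x2 x3. om x1 x2 x3 - om' x1 x2 x3 =
           th x2 x3 (f x1) - th x1 x3 (f x2) + D x1 x2 (f x3) - f (tr x1 x2 x3)"
      unfolding coboundary23_def by blast
    have nu': "nu' x1 x2 = nu x1 x2 - (rho x1 (f x2) - rho x2 (f x1) - f (br x1 x2))" for x1 x2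
      using nud[of x1 x2] by (simp add: algebra_simps)
    have om': "om' x1 x2 x3 = om x1 x2 x3 - (th x2 x3 (f x1) - th x1 x3 (f x2) + D x1 x2 (f x3) - f (tr x1 x2 x3))" for x1 x2 x3
      using omd[of x1 x2 x3] by (simp add: algebra_simps)
    define F where "F p = (fst p, snd p + f (fst p))" for p
    have "HLYA_hom (prod_scale sT sV) (sd_alpha al be) (sd_br br rho nu) (sd_tr tr D th om)
          (prod_scale sT sV) (sd_alpha al be) (sd_br br rho nu') (sd_tr tr D th om') F"
      unfolding HLYA_hom_def
    proof (intro conjI allI)
      show "Vector_Spaces.linear (prod_scale sT sV) (prod_scale sT sV) F"
        unfolding Vector_Spaces.linear_iff
      proof (intro conjI allI vP)
        fix x y show "F (x + y) = F x + F y"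
          by (simp add: F_def lin_add[OF lf] algebra_simps)
      next
        fix c x show "F (prod_scale sT sV c x) = prod_scale sT sV c (F x)"
          by (simp add: F_def prod_scale_def lin_scale[OF lf] module.scale_right_distrib[OF vs_mod[OF vV]])
      qed
    next
      fix x show "F (sd_alpha al be x) = sd_alpha al be (F x)"
        by (simp add: F_def sd_alpha_def fal ad)
    next
      fix x y show "F (sd_br br rho nu x y) = sd_br br rho nu' (F x) (F y)"
        by (cases x; cases y; simp add: F_def sd_br_def nu' ad; simp add: algebra_simps)
    next
      fix x y w show "F (sd_tr tr D th om x y w) = sd_tr tr D th om' (F x) (F y) (F w)"
        by (cases x; cases y; cases w; simp add: F_def sd_tr_def om' ad; simp add: algebra_simps)
    qed
    moreover have "F \<circ> (\<lambda>u. (0, u)) = (\<lambda>u. (0, u))"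
      by (simp add: fun_eq_iff F_def lin_zero[OF lf])
    moreover have "fst \<circ> F = fst" by (simp add: fun_eq_iff F_def)
    ultimately show "ext_equiv (prod_scale sT sV) (sd_alpha al be) (sd_br br rho nu) (sd_tr tr D th om)
            (\<lambda>u. (0, u)) fst
          (prod_scale sT sV) (sd_alpha al be) (sd_br br rho nu') (sd_tr tr D th om')
            (\<lambda>u. (0, u)) fst"
      unfolding ext_equiv_def by blast
  qed
qed

end
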